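(* Let $n\ge2$ and $Q\in SU_n$ with eigenvalues $\mu_1,\dots,\mu_n$ (with multiplicity) ordered so that $\arg(\mu_1)\le\cdots\le\arg(\mu_n)$, and let $\zeta(Q):=\frac1{2\pi}\sum_{j=1}^n\arg(\mu_j)\in\mathbb{Z}$. Let $W_Q:=\{\underline{k}=(k_1,\dots,k_n)\in\mathbb{Z}^n:\sum_{j=1}^nk_j=-\zeta(Q)\}$, $\psi_Q:W_Q\to\mathbb{R}$, $\psi_Q(\underline{k})=\sum_{j=1}^n(\arg(\mu_j)+2k_j\pi)^2$, $\Delta_Q(\underline{k}):=\max\{k_1,\dots,k_n\}-\min\{k_1,\dots,k_n\}$, $Z_Q:=\{\underline{k}\in W_Q:\Delta_Q(\underline{k})\le1\}$, and $m(Q):=\min\{\psi_Q(\underline{k}):\underline{k}\in W_Q\}$. Then $\psi_Q(\underline{k})>m(Q)$ for every $\underline{k}\in W_Q\setminus Z_Q$; consequently $m(Q)=\min\{\psi_Q(\underline{k}):\underline{k}\in Z_Q\}$.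
   Context: $SU_n$ is the special unitary group and $\arg(z)\in(-\pi,\pi]$ the principal argument. (The quantity $m(Q)$ coincides with $\min\{\mathrm{tr}(XX^* ):X\in\mathfrak{su}_n,\ \exp(X)=Q\}$.) *)

theory Defs
  imports "HOL-Analysis.Analysis" "Jordan_Normal_Form.Schur_Decomposition"
begin

definition SU :: "nat \<Rightarrow> complex mat set" where
  "SU n = {Q \<in> carrier_mat n n. Q * mat_adjoint Q = 1\<^sub>m n \<and> mat_adjoint Q * Q = 1\<^sub>m n \<and> det Q = 1}"

definition eigenvalue_list :: "complex mat \<Rightarrow> complex list \<Rightarrow> bool" where
  "eigenvalue_list Q mu \<longleftrightarrow> length mu = dim_row Q \<and>
     char_poly Q = (\<Prod>a\<leftarrow>mu. [:- a, 1:])"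

definition zeta :: "complex list \<Rightarrow> real" where
  "zeta mu = (\<Sum>j<length mu. Arg (mu ! j)) / (2 * pi)"

definition W :: "complex list \<Rightarrow> int list set" where
  "W mu = {k. length k = length mu \<and> real_of_int (sum_list k) = - zeta mu}"

definition psi :: "complex list \<Rightarrow> int list \<Rightarrow> real" where
  "psi mu k = (\<Sum>j<length mu. (Arg (mu ! j) + 2 * real_of_int (k ! j) * pi)\<^sup>2)"

definition Delta :: "int list \<Rightarrow> int" where
  "Delta k = Max (set k) - Min (set k)"

definition Z :: "complex list \<Rightarrow> int list set" where
  "Z mu = {k \<in> W mu. Delta k \<le> 1}"

definition m_val :: "complex list \<Rightarrow> real" where
  "m_val mu = Inf (psi mu ` W mu)"

end

theory Submission
  imports Defs
begin

lemma poly_prod_lin_0: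
  "poly (\<Prod>a\<leftarrow>mu. [:- a, 1:]) 0 = (-1) ^ length mu * prod_list (mu :: complex list)"
  by (induction mu) auto

lemma prod_eigen_det:
  assumes Q: "Q \<in> carrier_mat n n" and e: "eigenvalue_list Q mu"
  shows "prod_list mu = det Q"
proof -
  have len: "length mu = n" using e Q unfolding eigenvalue_list_def by auto
  have "poly (char_poly Q) 0 = det (- char_matrix Q 0)" by (rule char_poly_matrix[OF Q])
  also have "char_matrix Q 0 = Q" unfolding char_matrix_def using Q by auto
  also have "- Q = (-1) \<cdot>\<^sub>m Q" using Q by (intro eq_matI) auto
  also have "det ((-1) \<cdot>\<^sub>m Q) = (-1) ^ n * det Q" using Q by simp
  finally have "(-1) ^ n * prod_list mu = (-1) ^ n * det Q"
    using e len unfolding eigenvalue_list_def by (simp add: poly_prod_lin_0)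
  then show ?thesis by simp
qed

lemma zeta_int:
  assumes p: "prod_list (mu :: complex list) = 1"
  shows "\<exists>c::int. zeta mu = of_int c"
proof -
  have nz: "\<And>j. j < length mu \<Longrightarrow> mu ! j \<noteq> 0"
    using p by (metis nth_mem prod_list_zero_iff zero_neq_one)
  have "prod_list mu = (\<Prod>j<length mu. mu ! j)"
    by (simp add: prod.list_conv_set_nth lessThan_atLeast0)
  also have "\<dots> = (\<Prod>j<length mu. exp (Ln (mu ! j)))"
    using nz by (intro prod.cong) auto
  also have "\<dots> = exp (\<Sum>j<length mu. Ln (mu ! j))" by (simp add: exp_sum)
  finally have "exp (\<Sum>j<length mu. Ln (mu ! j)) = 1" using p by simp
  then obtain c where c: "Im (\<Sum>j<length mu. Ln (mu ! j)) = real_of_int (2 * c) * pi"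
    unfolding exp_eq_1 by blast
  have "(\<Sum>j<length mu. Arg (mu ! j)) = Im (\<Sum>j<length mu. Ln (mu ! j))"
    using nz by (simp add: Im_sum Arg_eq_Im_Ln)
  then have "zeta mu = of_int c" unfolding zeta_def using c by simp
  then show ?thesis by blast
qed

lemma sum_two_upd:
  fixes g g' :: "nat \<Rightarrow> 'a::comm_ring"
  assumes "i < N" "j < N" "i \<noteq> j"
    and "\<And>l. l < N \<Longrightarrow> g' l = g l + ((if l = i then di else 0) + (if l = j then dj else 0))"
  shows "(\<Sum>l<N. g' l) = (\<Sum>l<N. g l) + (di + dj)"
proof -
  have "(\<Sum>l<N. g' l) = (\<Sum>l<N. g l + ((if l = i then di else 0) + (if l = j then dj else 0)))"
    using assms(4) by (intro sum.cong) auto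
  also have "\<dots> = (\<Sum>l<N. g l) + (di + dj)"
    using assms(1-3) by (simp add: sum.distrib)
  finally show ?thesis .
qed

lemma move:
  assumes kW: "k \<in> W mu" and i: "i < length mu" and j: "j < length mu"
    and ij: "k ! j + 2 \<le> k ! i"
  shows "k[i := k ! i - 1, j := k ! j + 1] \<in> W mu
    \<and> psi mu (k[i := k ! i - 1, j := k ! j + 1]) < psi mu k"
proof -
  define k' where "k' = k[i := k ! i - 1, j := k ! j + 1]"
  have neq: "i \<noteq> j" using ij by auto
  have len: "length k = length mu" using kW unfolding W_def by auto
  have len': "length k' = length mu" using len unfolding k'_def by simp
  have nth': "\<And>l. l < length mu \<Longrightarrow> k' ! l = k ! l + ((if l = i then -1 else 0) + (if l = j then 1 else 0))"
    unfolding k'_def using len i j neq by (auto simp: nth_list_update)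
  have "sum_list k' = (\<Sum>l<length mu. k' ! l)"
    using len' by (simp add: sum_list_sum_nth lessThan_atLeast0)
  also have "\<dots> = (\<Sum>l<length mu. k ! l) + ((-1) + 1)"
    by (rule sum_two_upd[OF i j neq]) (simp add: nth')
  also have "\<dots> = sum_list k"
    using len by (simp add: sum_list_sum_nth lessThan_atLeast0)
  finally have "sum_list k' = sum_list k" .
  then have W': "k' \<in> W mu" using kW len' unfolding W_def by auto
  define a where "a = (\<lambda>l. Arg (mu ! l))"
  define di where "di = (a i + 2 * real_of_int (k ! i - 1) * pi)\<^sup>2 - (a i + 2 * real_of_int (k ! i) * pi)\<^sup>2"
  define dj where "dj = (a j + 2 * real_of_int (k ! j + 1) * pi)\<^sup>2 - (a j + 2 * real_of_int (k ! j) * pi)\<^sup>2"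
  have "psi mu k' = (\<Sum>l<length mu. (a l + 2 * real_of_int (k' ! l) * pi)\<^sup>2)"
    unfolding psi_def a_def ..
  also have "\<dots> = (\<Sum>l<length mu. (a l + 2 * real_of_int (k ! l) * pi)\<^sup>2) + (di + dj)"
    by (rule sum_two_upd[OF i j neq]) (use neq in \<open>auto simp: nth' di_def dj_def\<close>)
  also have "(\<Sum>l<length mu. (a l + 2 * real_of_int (k ! l) * pi)\<^sup>2) = psi mu k"
    unfolding psi_def a_def ..
  finally have ps: "psi mu k' = psi mu k + (di + dj)" .
  have e: "di + dj = 4 * pi * ((a j - a i) + 2 * pi * real_of_int (k ! j - k ! i) + 2 * pi)"
    unfolding di_def dj_def by (simp add: power2_eq_square algebra_simps)
  have aa: "a j - a i < 2 * pi" unfolding a_def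
    using Arg_le_pi[of "mu ! j"] mpi_less_Arg[of "mu ! i"] by linarith
  have kk: "real_of_int (k ! j - k ! i) \<le> -2" using ij by linarith
  have "2 * pi * real_of_int (k ! j - k ! i) \<le> 2 * pi * (-2)"
    using kk by (intro mult_left_mono) auto
  then have "(a j - a i) + 2 * pi * real_of_int (k ! j - k ! i) + 2 * pi < 0" using aa by linarith
  then have "di + dj < 0" unfolding e by (simp add: mult_pos_neg)
  then show ?thesis using W' ps unfolding k'_def by auto
qed


lemma fin_bounded: "finite {k::int list. length k = N \<and> (\<forall>x\<in>set k. \<bar>x\<bar> \<le> B)}"
proof (rule finite_subset[OF _ finite_lists_length_eq[of "{-B..B}" N]])
  show "{k::int list. length k = N \<and> (\<forall>x\<in>set k. \<bar>x\<bar> \<le> B)} \<subseteq> {xs. set xs \<subseteq> {- B..B} \<and> length xs = N}"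
    by (auto simp: abs_le_iff)
qed auto

lemma sublevel_bound:
  assumes len: "length k = length mu" and C: "psi mu k \<le> C" and x: "x \<in> set k"
  shows "\<bar>x\<bar> \<le> \<lceil>(sqrt C + pi) / (2 * pi)\<rceil>"
proof -
  obtain j where j: "j < length k" and xj: "x = k ! j" using x by (auto simp: in_set_conv_nth)
  define a where "a = Arg (mu ! j)"
  have "(a + 2 * real_of_int x * pi)\<^sup>2 \<le> psi mu k"
    unfolding psi_def a_def xj using j len by (intro member_le_sum) auto
  then have "(a + 2 * real_of_int x * pi)\<^sup>2 \<le> C" using C by linarith
  then have "sqrt ((a + 2 * real_of_int x * pi)\<^sup>2) \<le> sqrt C" by (rule real_sqrt_le_mono)
  then have h: "\<bar>a + 2 * real_of_int x * pi\<bar> \<le> sqrt C" by simp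
  have "\<bar>a\<bar> \<le> pi" unfolding a_def using Arg_le_pi[of "mu ! j"] mpi_less_Arg[of "mu ! j"] by auto
  then have "\<bar>2 * real_of_int x * pi\<bar> \<le> sqrt C + pi" using h by linarith
  then have "\<bar>real_of_int x\<bar> * (2 * pi) \<le> sqrt C + pi" by (simp add: abs_mult)
  then have "\<bar>real_of_int x\<bar> \<le> (sqrt C + pi) / (2 * pi)" by (simp add: pos_le_divide_eq)
  then have "real_of_int \<bar>x\<bar> \<le> (sqrt C + pi) / (2 * pi)" by simp
  then show ?thesis by linarith
qed

lemma Z_bound:
  assumes kZ: "k \<in> Z mu" and c: "zeta mu = of_int c" and N: "length mu \<ge> 1"
    and x: "x \<in> set k"
  shows "\<bar>x\<bar> \<le> \<bar>c\<bar> + 1"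
proof -
  have len: "length k = length mu" and s: "sum_list k = - c" and D: "Delta k \<le> 1"
    using kZ c unfolding Z_def W_def by auto
  have ne: "set k \<noteq> {}" using len N by auto
  define lo where "lo = Min (set k)"
  define hi where "hi = Max (set k)"
  have D': "hi \<le> lo + 1" using D unfolding Delta_def lo_def hi_def by simp
  have xl: "lo \<le> x" "x \<le> hi" unfolding lo_def hi_def using x by auto
  have sk: "sum_list k = (\<Sum>l<length k. k ! l)" by (simp add: sum_list_sum_nth lessThan_atLeast0)
  have "(\<Sum>l<length k. lo) \<le> (\<Sum>l<length k. k ! l)"
    by (intro sum_mono) (auto simp: lo_def)
  then have A: "int (length k) * lo \<le> - c" using s sk by simp
  have "(\<Sum>l<length k. k ! l) \<le> (\<Sum>l<length k. hi)"
    by (intro sum_mono) (auto simp: hi_def)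
  then have B: "- c \<le> int (length k) * hi" using s sk by simp
  have N1: "int (length k) \<ge> 1" using len N by simp
  have "lo \<le> \<bar>c\<bar>"
  proof (rule ccontr)
    assume "\<not> lo \<le> \<bar>c\<bar>"
    then have "lo > \<bar>c\<bar>" by simp
    then have "int (length k) * lo \<ge> 1 * lo" using N1 by (intro mult_right_mono) auto
    then show False using A \<open>lo > \<bar>c\<bar>\<close> by linarith
  qed
  moreover have "hi \<ge> - \<bar>c\<bar>"
  proof (rule ccontr)
    assume "\<not> hi \<ge> - \<bar>c\<bar>"
    then have "hi < - \<bar>c\<bar>" by simp
    then have "int (length k) * hi \<le> 1 * hi" using N1 by (intro mult_right_mono_neg) auto
    then show False using B \<open>hi < - \<bar>c\<bar>\<close> by linarith
  qed
  ultimately show ?thesis using xl D' by linarith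
qed

theorem lemma2p6:
  fixes n :: nat and Q :: "complex mat" and mu :: "complex list"
  assumes "n \<ge> 2"
    and "Q \<in> SU n"
    and "eigenvalue_list Q mu"
    and "sorted_wrt (\<lambda>a b. Arg a \<le> Arg b) mu"
  shows "zeta mu \<in> \<int>
    \<and> (\<exists>k\<in>W mu. psi mu k = m_val mu)
    \<and> (\<forall>k \<in> W mu - Z mu. psi mu k > m_val mu)
    \<and> m_val mu = Min (psi mu ` Z mu)"
proof -
  have Q: "Q \<in> carrier_mat n n" and d: "det Q = 1" using assms(2) unfolding SU_def by auto
  have len: "length mu = n" using assms(3) Q unfolding eigenvalue_list_def by auto
  have "prod_list mu = 1" using prod_eigen_det[OF Q assms(3)] d by simp
  then obtain c where c: "zeta mu = of_int c" using zeta_int by blast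
  have zi: "zeta mu \<in> \<int>" using c by simp
  have N: "length mu \<ge> 1" using len assms(1) by simp
  define k0 where "k0 = (- c) # replicate (length mu - 1) (0::int)"
  have k0W: "k0 \<in> W mu" unfolding k0_def W_def using N c by (auto simp: sum_list_replicate)
  define C where "C = psi mu k0"
  define S where "S = {k \<in> W mu. psi mu k \<le> C}"
  have Sfin: "finite S"
  proof (rule finite_subset[OF _ fin_bounded[of "length mu" "\<lceil>(sqrt C + pi) / (2 * pi)\<rceil>"]])
    show "S \<subseteq> {k. length k = length mu \<and> (\<forall>x\<in>set k. \<bar>x\<bar> \<le> \<lceil>(sqrt C + pi) / (2 * pi)\<rceil>)}"
      unfolding S_def W_def using sublevel_bound unfolding W_def by auto
  qed
  have k0S: "k0 \<in> S" unfolding S_def C_def using k0W by auto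
  have "Min (psi mu ` S) \<in> psi mu ` S" using Sfin k0S by (intro Min_in) auto
  then obtain ks where ksS: "ks \<in> S" and ksmin: "psi mu ks = Min (psi mu ` S)" by auto
  have ksW: "ks \<in> W mu" using ksS unfolding S_def by auto
  have lower: "psi mu ks \<le> psi mu k" if "k \<in> W mu" for k
  proof (cases "psi mu k \<le> C")
    case True
    then have "k \<in> S" using that unfolding S_def by auto
    then show ?thesis unfolding ksmin using Sfin by auto
  next
    case False
    then show ?thesis using ksS unfolding S_def by auto
  qed
  have mval: "m_val mu = psi mu ks" unfolding m_val_def
    using ksW lower by (intro cInf_eq_minimum) auto
  have strict: "psi mu k > m_val mu" if kWZ: "k \<in> W mu - Z mu" for k
  proof -
    have kW: "k \<in> W mu" and D: "Delta k > 1" using kWZ unfolding Z_def by auto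
    have lenk: "length k = length mu" using kW unfolding W_def by auto
    have ne: "set k \<noteq> {}" using lenk N by auto
    have "Max (set k) \<in> set k" "Min (set k) \<in> set k" using ne by auto
    then obtain i j where i: "i < length mu" "k ! i = Max (set k)"
      and j: "j < length mu" "k ! j = Min (set k)"
      using lenk by (metis in_set_conv_nth)
    have "k ! j + 2 \<le> k ! i" using D i j unfolding Delta_def by simp
    from move[OF kW i(1) j(1) this] obtain k' where "k' \<in> W mu" "psi mu k' < psi mu k" by blast
    then show ?thesis using lower[of k'] mval by simp
  qed
  have ksZ: "ks \<in> Z mu"
  proof (rule ccontr)
    assume "ks \<notin> Z mu"
    then have "psi mu ks > m_val mu" using strict ksW by auto
    then show False using mval by simp
  qed
  have Zfin: "finite (Z mu)"
  proof (rule finite_subset[OF _ fin_bounded[of "length mu" "\<bar>c\<bar> + 1"]])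
    show "Z mu \<subseteq> {k. length k = length mu \<and> (\<forall>x\<in>set k. \<bar>x\<bar> \<le> \<bar>c\<bar> + 1)}"
      using Z_bound[OF _ c N] unfolding Z_def W_def by auto
  qed
  have "Min (psi mu ` Z mu) = psi mu ks"
    using Zfin ksZ lower unfolding Z_def by (intro Min_eqI) auto
  then show ?thesis using zi ksW mval strict by auto
qed

end
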